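(* Every topological space $X$ that admits a selection map has the universal fixed point property. Conversely, if $X$ is a topological space with the universal fixed point property for which the evaluation map $C(X,X)\times X\to X$, $(f,x)\mapsto f(x)$, is continuous, then $X$ admits a selection map.
   Context: For a topological space $X$, let $C(X,X)$ be the set of continuous self-maps of $X$ with the compact-open topology (generated by the sets $\{g\mid g(K)\subseteq U\}$, $K\subseteq X$ compact, $U\subseteq X$ open). A selection map for $X$ is a continuous map $\Phi\colon C(X,X)\to X$ such that $f(\Phi(f))=\Phi(f)$ for all $f\in C(X,X)$. The space $X$ has the universal fixed point property if for every topological space $T$ and every continuous map $f\colon T\times X\to X$ there exists a continuous map $p\colon T\to X$ with $f(t,p(t))=p(t)$ for all $t\in T$. *)

theory Defs
  imports "HOL-Analysis.Analysis"
begin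

text \<open>Functions on the type 'a are
  normalised to be extensional (value undefined) outside topspace X, so that each
  continuous map on X has exactly one representative.\<close>
definition cmaps :: "'a topology \<Rightarrow> ('a \<Rightarrow> 'a) set" where
  "cmaps X = {f. continuous_map X X f \<and> f \<in> extensional (topspace X)}"

definition compact_open :: "'a topology \<Rightarrow> ('a \<Rightarrow> 'a) topology" where
  "compact_open X = topology_generated_by
     {{g \<in> cmaps X. g ` K \<subseteq> U} | K U. compactin X K \<and> openin X U}"

definition selection_map :: "'a topology \<Rightarrow> (('a \<Rightarrow> 'a) \<Rightarrow> 'a) \<Rightarrow> bool" where
  "selection_map X \<Phi> \<longleftrightarrow> continuous_map (compact_open X) X \<Phi> \<and>
     (\<forall>f \<in> cmaps X. f (\<Phi> f) = \<Phi> f)"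

definition param_fpp :: "'b topology \<Rightarrow> 'a topology \<Rightarrow> bool" where
  "param_fpp T X \<longleftrightarrow> (\<forall>f. continuous_map (prod_topology T X) X f \<longrightarrow>
     (\<exists>p. continuous_map T X p \<and> (\<forall>t \<in> topspace T. f (t, p t) = p t)))"

definition eval_continuous :: "'a topology \<Rightarrow> bool" where
  "eval_continuous X \<longleftrightarrow>
     continuous_map (prod_topology (compact_open X) X) X (\<lambda>(f, x). f x)"

end

theory Submission
  imports Defs
begin

lemma topspace_compact_open: "topspace (compact_open X) = cmaps X"
  unfolding compact_open_def topology_generated_by_topspace
  apply (rule equalityI)
   apply blast
  apply (rule subsetI)
  subgoal for g
    apply (rule UnionI[of "{g \<in> cmaps X. g ` {} \<subseteq> {}}"])
     apply (rule CollectI, rule exI[of _ "{}"], rule exI[of _ "{}"])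
    by auto
  done

lemma slice_cont:
  assumes f: "continuous_map (prod_topology T X) X f" and t: "t \<in> topspace T"
  shows "continuous_map X X (\<lambda>x. f (t, x))"
proof -
  have "continuous_map X (prod_topology T X) (\<lambda>x. (t, x))"
    using t by (auto simp: continuous_map_pairwise o_def)
  then show ?thesis using continuous_map_compose[OF _ f] by (simp add: o_def)
qed

lemma curry_cont:
  assumes f: "continuous_map (prod_topology T X) X f"
  shows "continuous_map T (compact_open X) (\<lambda>t. restrict (\<lambda>x. f (t, x)) (topspace X))"
proof -
  have mem: "restrict (\<lambda>x. f (t, x)) (topspace X) \<in> cmaps X" if "t \<in> topspace T" for t
  proof -
    have "continuous_map X X (restrict (\<lambda>x. f (t, x)) (topspace X))"
      by (rule continuous_map_eq[OF slice_cont[OF f that]]) simp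
    then show ?thesis by (simp add: cmaps_def)
  qed
  show ?thesis
    unfolding compact_open_def
  proof (rule continuous_on_generated_topo)
    show "(\<lambda>t. restrict (\<lambda>x. f (t, x)) (topspace X)) ` topspace T
      \<subseteq> \<Union> {{g \<in> cmaps X. g ` K \<subseteq> U} |K U. compactin X K \<and> openin X U}"
    proof (rule subsetI)
      fix g assume "g \<in> (\<lambda>t. restrict (\<lambda>x. f (t, x)) (topspace X)) ` topspace T"
      then have g: "g \<in> cmaps X" using mem by blast
      have "{g \<in> cmaps X. g ` {} \<subseteq> {}} \<in> {{g \<in> cmaps X. g ` K \<subseteq> U} |K U. compactin X K \<and> openin X U}"
        by (intro CollectI exI[of _ "{}"]) auto
      moreover have "g \<in> {g \<in> cmaps X. g ` {} \<subseteq> {}}" using g by simp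
      ultimately show "g \<in> \<Union> {{g \<in> cmaps X. g ` K \<subseteq> U} |K U. compactin X K \<and> openin X U}"
        by (rule UnionI)
    qed
  next
    fix S assume "S \<in> {{g \<in> cmaps X. g ` K \<subseteq> U} |K U. compactin X K \<and> openin X U}"
    then obtain K U where S: "S = {g \<in> cmaps X. g ` K \<subseteq> U}" and K: "compactin X K" and U: "openin X U"
      by blast
    have KX: "K \<subseteq> topspace X" using K compactin_subset_topspace by blast
    have eq: "(\<lambda>t. restrict (\<lambda>x. f (t, x)) (topspace X)) -` S \<inter> topspace T
       = {t \<in> topspace T. \<forall>x\<in>K. f (t, x) \<in> U}"
      using mem KX unfolding S by auto
    define W where "W = {z \<in> topspace (prod_topology T X). f z \<in> U}"
    have W: "openin (prod_topology T X) W"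
      unfolding W_def using openin_continuous_map_preimage[OF f U] .
    show "openin T ((\<lambda>t. restrict (\<lambda>x. f (t, x)) (topspace X)) -` S \<inter> topspace T)"
      unfolding eq
    proof (subst openin_subopen, intro ballI)
      fix t0 assume t0: "t0 \<in> {t \<in> topspace T. \<forall>x\<in>K. f (t, x) \<in> U}"
      have sub: "{t0} \<times> K \<subseteq> W" using t0 KX unfolding W_def by auto
      have t0T: "t0 \<in> topspace T" using t0 by simp
      from tube_lemma_right[OF W K t0T sub] obtain V V' where
        VV: "openin T V" "openin X V'" "t0 \<in> V" "K \<subseteq> V'" "V \<times> V' \<subseteq> W"
        by blast
      have "V \<subseteq> {t \<in> topspace T. \<forall>x\<in>K. f (t, x) \<in> U}"
        using VV openin_subset[OF VV(1)] unfolding W_def by blast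
      then show "\<exists>T'. openin T T' \<and> t0 \<in> T' \<and> T' \<subseteq> {t \<in> topspace T. \<forall>x\<in>K. f (t, x) \<in> U}"
        using VV by blast
    qed
  qed
qed

theorem theorem7p3:
  fixes X :: "'a topology"
  shows "((\<exists>\<Phi>. selection_map X \<Phi>) \<longrightarrow> (\<forall>T :: 'b topology. param_fpp T X))
       \<and> ((\<forall>T :: ('a \<Rightarrow> 'a) topology. param_fpp T X) \<and> eval_continuous X
            \<longrightarrow> (\<exists>\<Phi>. selection_map X \<Phi>))"
proof (intro conjI impI allI)
  fix T :: "'b topology"
  assume "\<exists>\<Phi>. selection_map X \<Phi>"
  then obtain \<Phi> where P: "continuous_map (compact_open X) X \<Phi>" "\<forall>f \<in> cmaps X. f (\<Phi> f) = \<Phi> f"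
    unfolding selection_map_def by blast
  show "param_fpp T X"
    unfolding param_fpp_def
  proof (intro allI impI)
    fix f assume f: "continuous_map (prod_topology T X) X f"
    define p where "p = \<Phi> \<circ> (\<lambda>t. restrict (\<lambda>x. f (t, x)) (topspace X))"
    have pc: "continuous_map T X p"
      unfolding p_def using continuous_map_compose[OF curry_cont[OF f] P(1)] .
    have "f (t, p t) = p t" if t: "t \<in> topspace T" for t
    proof -
      have m: "restrict (\<lambda>x. f (t, x)) (topspace X) \<in> cmaps X"
      proof -
        have "continuous_map X X (restrict (\<lambda>x. f (t, x)) (topspace X))"
          by (rule continuous_map_eq[OF slice_cont[OF f t]]) simp
        then show ?thesis by (simp add: cmaps_def)
      qed
      have "p t \<in> topspace X" using continuous_map_image_subset_topspace[OF pc] t by blast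
      then show ?thesis using P(2) m unfolding p_def by auto
    qed
    then show "\<exists>p. continuous_map T X p \<and> (\<forall>t\<in>topspace T. f (t, p t) = p t)"
      using pc by blast
  qed
next
  assume A: "(\<forall>T :: ('a \<Rightarrow> 'a) topology. param_fpp T X) \<and> eval_continuous X"
  then obtain p where p: "continuous_map (compact_open X) X p"
    "\<forall>t\<in>topspace (compact_open X). (\<lambda>(f, x). f x) (t, p t) = p t"
    unfolding param_fpp_def eval_continuous_def by blast
  show "\<exists>\<Phi>. selection_map X \<Phi>"
    unfolding selection_map_def using p topspace_compact_open[of X] by auto
qed

end
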